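(* Let $q\ge 0$ and $d$ be integers with $2\le d\le 4+6q$. Then $\frac{3}{d+3}\le f(2,d)\le \frac{3}{d+1+\frac{1}{q+1}}$.
   Context: For a graph $G=(V,E)$ and an integer $k\ge 0$, a $k$-independent set is a set $S\subseteq V$ such that the induced subgraph $G[S]$ has maximum degree at most $k$; $\alpha_k(G)$ denotes the maximum cardinality of a $k$-independent set of $G$. $n(G)$ is the number of vertices and $d(G)=2|E(G)|/n(G)$ the average degree. For integers $d,k\ge 0$, $f(k,d)=\inf\left\{\frac{\alpha_k(G)}{n(G)} : G \text{ a finite simple graph with at least one vertex and } d(G)\le d\right\}$. *)

theory Defs
  imports Complex_Main
begin

text \<open>A finite simple graph is represented by a finite vertex set V of naturals
 (every finite graph is isomorphic to one of these) and a set E of edges, each edge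
 being a 2-element subset of V.\<close>

definition simple_graph :: "nat set \<Rightarrow> nat set set \<Rightarrow> bool" where
  "simple_graph V E \<longleftrightarrow> finite V \<and> (\<forall>e\<in>E. e \<subseteq> V \<and> card e = 2)"

definition k_independent :: "nat set \<Rightarrow> nat set set \<Rightarrow> nat \<Rightarrow> nat set \<Rightarrow> bool" where
  "k_independent V E k S \<longleftrightarrow> S \<subseteq> V \<and> (\<forall>v\<in>S. card {u\<in>S. {u, v} \<in> E} \<le> k)"

definition alpha_k :: "nat set \<Rightarrow> nat set set \<Rightarrow> nat \<Rightarrow> nat" where
  "alpha_k V E k = Max (card ` {S. k_independent V E k S})"

definition avg_degree :: "nat set \<Rightarrow> nat set set \<Rightarrow> real" where
  "avg_degree V E = 2 * real (card E) / real (card V)"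

definition f_ratio :: "nat \<Rightarrow> real \<Rightarrow> real" where
  "f_ratio k d = Inf {real (alpha_k V E k) / real (card V) | V E.
      simple_graph V E \<and> V \<noteq> {} \<and> avg_degree V E \<le> d}"

end

theory Submission
  imports Defs
begin


definition eS :: "nat set set \<Rightarrow> nat set \<Rightarrow> nat" where
  "eS E X = card {e\<in>E. e \<subseteq> X}"
definition dg :: "nat set set \<Rightarrow> nat set \<Rightarrow> nat \<Rightarrow> nat" where
  "dg E X v = card {u\<in>X. {u,v} \<in> E}"

lemma eS_insert:
  assumes E2: "\<forall>e\<in>E. card e = 2" and fX: "finite X" and wX: "w \<notin> X"
  shows "eS E (insert w X) = eS E X + dg E X w"
proof -
  have eq: "{e\<in>E. e \<subseteq> insert w X} = {e\<in>E. e \<subseteq> X} \<union> ((\<lambda>u. {u,w}) ` {u\<in>X. {u,w}\<in>E})"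
  proof (rule set_eqI, rule iffI)
    fix e assume "e \<in> {e\<in>E. e \<subseteq> insert w X}"
    hence eE: "e \<in> E" and sub: "e \<subseteq> insert w X" by auto
    show "e \<in> {e\<in>E. e \<subseteq> X} \<union> ((\<lambda>u. {u,w}) ` {u\<in>X. {u,w}\<in>E})"
    proof (cases "w \<in> e")
      case False thus ?thesis using eE sub by auto
    next
      case True
      from E2 eE obtain a b where ab: "e = {a,b}" "a \<noteq> b" by (meson card_2_iff)
      show ?thesis
      proof (cases "a = w")
        case True
        hence "b \<in> X" using ab sub by auto
        moreover have "e = {b,w}" using ab True by auto
        ultimately show ?thesis using eE by auto
      next
        case False
        hence "b = w" using ab \<open>w \<in> e\<close> by auto
        hence "a \<in> X" using ab sub False by auto
        thus ?thesis using eE ab \<open>b = w\<close> by auto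
      qed
    qed
  next
    fix e assume "e \<in> {e\<in>E. e \<subseteq> X} \<union> ((\<lambda>u. {u,w}) ` {u\<in>X. {u,w}\<in>E})"
    thus "e \<in> {e\<in>E. e \<subseteq> insert w X}" by auto
  qed
  have fin1: "finite {e\<in>E. e \<subseteq> X}"
    by (rule finite_subset[of _ "Pow X"]) (auto simp: fX)
  have fin2: "finite {u\<in>X. {u,w}\<in>E}" using fX by auto
  have disj: "{e\<in>E. e \<subseteq> X} \<inter> ((\<lambda>u. {u,w}) ` {u\<in>X. {u,w}\<in>E}) = {}" using wX by auto
  have inj: "inj_on (\<lambda>u. {u,w}) {u\<in>X. {u,w}\<in>E}"
    by (rule inj_onI) (use wX in \<open>auto simp: doubleton_eq_iff\<close>)
  have "eS E (insert w X) = card {e\<in>E. e \<subseteq> X} + card ((\<lambda>u. {u,w}) ` {u\<in>X. {u,w}\<in>E})"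
    unfolding eS_def eq by (rule card_Un_disjoint) (use fin1 fin2 disj in auto)
  also have "card ((\<lambda>u. {u,w}) ` {u\<in>X. {u,w}\<in>E}) = dg E X w"
    unfolding dg_def by (rule card_image[OF inj])
  finally show ?thesis unfolding eS_def by simp
qed

lemma dg_union:
  assumes "finite S" "finite F" "S \<inter> F = {}"
  shows "dg E (S \<union> F) w = dg E S w + dg E F w"
proof -
  have "{u\<in>S \<union> F. {u,w}\<in>E} = {u\<in>S. {u,w}\<in>E} \<union> {u\<in>F. {u,w}\<in>E}" by auto
  thus ?thesis unfolding dg_def using assms by (simp add: card_Un_disjoint disjoint_iff)
qed

lemma cross:
  assumes E2: "\<forall>e\<in>E. card e = 2" and fS: "finite S" and fT: "finite T"
    and disj: "S \<inter> T = {}" and big: "\<forall>w\<in>T. 3 \<le> dg E S w"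
  shows "eS E T + 3 * card T \<le> eS E (S \<union> T)"
  using fT disj big
proof (induction T rule: finite_induct)
  case empty
  have "{e\<in>E. e \<subseteq> {}} = {}" using E2 by force
  hence "eS E {} = 0" unfolding eS_def by (metis card.empty)
  thus ?case by simp
next
  case (insert w F)
  have wS: "w \<notin> S" using insert by auto
  have IH: "eS E F + 3 * card F \<le> eS E (S \<union> F)" using insert by auto
  have e1: "eS E (insert w F) = eS E F + dg E F w" by (rule eS_insert[OF E2 insert(1) insert(2)])
  have e2: "eS E (S \<union> insert w F) = eS E (S \<union> F) + dg E (S \<union> F) w"
    using eS_insert[OF E2, of "S \<union> F" w] fS insert(1,2) wS by simp
  have e3: "dg E (S \<union> F) w = dg E S w + dg E F w"
    by (rule dg_union) (use fS insert in auto)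
  have "3 \<le> dg E S w" using insert by auto
  thus ?case using IH e1 e2 e3 insert(1,2) by simp
qed

lemma alpha_fin: "finite V \<Longrightarrow> finite (card ` {S. k_independent V E k S})"
  by (rule finite_imageI, rule finite_subset[of _ "Pow V"]) (auto simp: k_independent_def)

lemma alpha_ge: "finite V \<Longrightarrow> k_independent V E k S \<Longrightarrow> card S \<le> alpha_k V E k"
  unfolding alpha_k_def by (rule Max_ge[OF alpha_fin]) auto

lemma alpha_wit: "finite V \<Longrightarrow> \<exists>S. k_independent V E k S \<and> card S = alpha_k V E k"
proof -
  assume f: "finite V"
  have "{} \<in> {S. k_independent V E k S}" by (simp add: k_independent_def)
  hence ne: "card ` {S. k_independent V E k S} \<noteq> {}" by blast
  have "alpha_k V E k \<in> card ` {S. k_independent V E k S}"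
    unfolding alpha_k_def by (rule Max_in[OF alpha_fin[OF f] ne])
  thus ?thesis by auto
qed

lemma alpha_le: "finite V \<Longrightarrow> (\<And>S. k_independent V E k S \<Longrightarrow> card S \<le> B) \<Longrightarrow> alpha_k V E k \<le> B"
  using alpha_wit by metis

lemma lower_nat:
  "simple_graph V E \<Longrightarrow> 3 * card V ^ 2 \<le> alpha_k V E 2 * (2 * card E + 3 * card V)"
proof (induction "card V" arbitrary: V E rule: less_induct)
  case less
  have fV: "finite V" and E2: "\<forall>e\<in>E. card e = 2" and EV: "\<forall>e\<in>E. e \<subseteq> V"
    using less(2) by (auto simp: simple_graph_def)
  show ?case
  proof (cases "V = {}")
    case True thus ?thesis by simp
  next
    case Vne: False
    define n where "n = card V"
    have n1: "n \<ge> 1" using Vne fV n_def by (simp add: Suc_leI card_gt_0_iff)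
    define \<mu> :: "nat set \<Rightarrow> int" where
      "\<mu> X = (int n + 1) * (3 * int (card X) - int (eS E X)) - int (card X)" for X
    have finP: "finite (\<mu> ` Pow V)" using fV by simp
    have neP: "\<mu> ` Pow V \<noteq> {}" by auto
    obtain S where SV: "S \<subseteq> V" and Smax: "\<And>X. X \<subseteq> V \<Longrightarrow> \<mu> X \<le> \<mu> S"
    proof -
      have "Max (\<mu> ` Pow V) \<in> \<mu> ` Pow V" by (rule Max_in[OF finP neP])
      then obtain S where "S \<in> Pow V" "\<mu> S = Max (\<mu> ` Pow V)" by auto
      moreover have "\<And>X. X \<subseteq> V \<Longrightarrow> \<mu> X \<le> Max (\<mu> ` Pow V)"
        by (rule Max_ge[OF finP]) auto
      ultimately show ?thesis using that by auto
    qed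
    have fS: "finite S" using SV fV finite_subset by blast
    have dom: "3 \<le> dg E S w" if wV: "w \<in> V" and wS: "w \<notin> S" for w
    proof (rule ccontr)
      assume "\<not> 3 \<le> dg E S w"
      hence lt: "dg E S w \<le> 2" by simp
      have "insert w S \<subseteq> V" using SV wV by auto
      hence le: "\<mu> (insert w S) \<le> \<mu> S" by (rule Smax)
      have ei: "eS E (insert w S) = eS E S + dg E S w" by (rule eS_insert[OF E2 fS wS])
      have ci: "card (insert w S) = card S + 1" using fS wS by simp
      have "\<mu> (insert w S) = \<mu> S + (int n + 1) * (3 - int (dg E S w)) - 1"
        unfolding \<mu>_def ei ci by (simp add: algebra_simps)
      moreover have "(int n + 1) * (3 - int (dg E S w)) \<ge> int n + 1"
        using lt by (simp add: mult_le_cancel_left1)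
      ultimately show False using le n1 by linarith
    qed
    have indep: "dg E S v \<le> 2" if vS: "v \<in> S" for v
    proof (rule ccontr)
      assume "\<not> dg E S v \<le> 2"
      hence ge: "dg E S v \<ge> 3" by simp
      define X where "X = S - {v}"
      have XV: "X \<subseteq> V" using SV X_def by auto
      hence le: "\<mu> X \<le> \<mu> S" by (rule Smax)
      have fX: "finite X" using fS X_def by simp
      have vX: "v \<notin> X" using X_def by simp
      have SX: "S = insert v X" using X_def vS by auto
      have ei: "eS E S = eS E X + dg E X v" unfolding SX by (rule eS_insert[OF E2 fX vX])
      have "{u\<in>X. {u,v}\<in>E} = {u\<in>S. {u,v}\<in>E}"
      proof -
        have "{v,v} \<notin> E" using E2 by force
        thus ?thesis using SX by auto
      qed
      hence dgX: "dg E X v = dg E S v" by (simp add: dg_def)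
      have ci: "card S = card X + 1" using fX vX SX by simp
      have "\<mu> X = \<mu> S + (int n + 1) * (int (dg E S v) - 3) + 1"
        unfolding \<mu>_def ei ci dgX by (simp add: algebra_simps)
      moreover have "(int n + 1) * (int (dg E S v) - 3) \<ge> 0" using ge by simp
      ultimately show False using le by linarith
    qed
    have kS: "k_independent V E 2 S" using SV indep by (simp add: k_independent_def dg_def)
    have Sne: "S \<noteq> {}"
    proof
      assume "S = {}"
      moreover obtain w where "w \<in> V" using Vne by auto
      ultimately have "3 \<le> dg E {} w" using dom by auto
      thus False by (simp add: dg_def)
    qed
    define T where "T = V - S"
    define E' where "E' = {e\<in>E. e \<subseteq> T}"
    have fT: "finite T" using fV T_def by simp
    have sgT: "simple_graph T E'" using fT E2 by (auto simp: simple_graph_def E'_def)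
    have ltT: "card T < card V"
    proof (rule psubset_card_mono[OF fV])
      show "T \<subset> V" using SV Sne T_def by blast
    qed
    have IH: "3 * card T ^ 2 \<le> alpha_k T E' 2 * (2 * card E' + 3 * card T)"
      using less(1)[OF ltT sgT] .
    have aT: "alpha_k T E' 2 \<le> alpha_k V E 2"
    proof -
      obtain X where X: "k_independent T E' 2 X" "card X = alpha_k T E' 2"
        using alpha_wit[OF fT] by blast
      have "k_independent V E 2 X"
      proof -
        have XT: "X \<subseteq> T" using X(1) by (simp add: k_independent_def)
        have "\<And>v. v \<in> X \<Longrightarrow> {u\<in>X. {u,v}\<in>E} = {u\<in>X. {u,v}\<in>E'}"
          using XT by (auto simp: E'_def)
        thus ?thesis using X(1) XT T_def by (auto simp: k_independent_def)
      qed
      thus ?thesis using alpha_ge[OF fV] X(2) by metis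
    qed
    have aS: "card S \<le> alpha_k V E 2" by (rule alpha_ge[OF fV kS])
    have cr: "eS E T + 3 * card T \<le> eS E (S \<union> T)"
      by (rule cross[OF E2 fS fT]) (use dom T_def in auto)
    have "S \<union> T = V" using SV T_def by auto
    moreover have "{e\<in>E. e \<subseteq> V} = E" using EV by auto
    ultimately have eV: "eS E (S \<union> T) = card E" by (simp add: eS_def)
    have eT: "eS E T = card E'" by (simp add: eS_def E'_def)
    have mE: "card E' + 3 * card T \<le> card E" using cr eV eT by simp
    have nST: "card V = card S + card T"
    proof -
      have "V = S \<union> T" using SV T_def by auto
      moreover have "S \<inter> T = {}" using T_def by auto
      ultimately show ?thesis using fS fT by (simp add: card_Un_disjoint)
    qed
    define A where "A = alpha_k V E 2"
    define x where "x = card S"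
    define t where "t = card T"
    define m where "m = card E"
    define m' where "m' = card E'"
    have h1: "3 * t^2 \<le> A * (2*m' + 3*t)" using IH aT unfolding A_def t_def m'_def
      by (meson le_trans mult_le_mono1)
    have h2: "m' + 3*t \<le> m" using mE unfolding m_def m'_def t_def .
    have h3: "x \<le> A" using aS unfolding x_def A_def .
    have "A * (2*m + 3*(x+t)) \<ge> A * (2*m' + 3*t) + A * (6*t + 3*x)"
    proof -
      have "2*m + 3*(x+t) \<ge> (2*m' + 3*t) + (6*t + 3*x)" using h2 by simp
      hence "A * (2*m + 3*(x+t)) \<ge> A * ((2*m' + 3*t) + (6*t + 3*x))" by (rule mult_le_mono2)
      thus ?thesis by (simp add: distrib_left)
    qed
    moreover have "A * (6*t + 3*x) \<ge> x * (6*t+3*x)" using h3 by (rule mult_le_mono1)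
    moreover have "3*(x+t)^2 = 3*t^2 + x*(6*t+3*x)" by (simp add: power2_eq_square algebra_simps)
    ultimately have "3*(x+t)^2 \<le> A * (2*m + 3*(x+t))" using h1 by linarith
    thus ?thesis unfolding A_def m_def using nST x_def t_def by simp
  qed
qed



definition cB :: "nat \<Rightarrow> nat \<Rightarrow> nat \<Rightarrow> nat" where
  "cB q d b = (if b = q then d + 2 else d + 1)"
definition blk :: "nat \<Rightarrow> nat \<Rightarrow> nat \<Rightarrow> nat set" where
  "blk q d b = {b*(d+1) ..< b*(d+1) + cB q d b}"
definition tri :: "nat \<Rightarrow> nat \<Rightarrow> nat set" where
  "tri d b = {b*(d+1) ..< b*(d+1) + 3}"
definition VV :: "nat \<Rightarrow> nat \<Rightarrow> nat set" where
  "VV q d = (\<Union>b\<in>{..q}. blk q d b)"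
definition EB :: "nat \<Rightarrow> nat \<Rightarrow> nat \<Rightarrow> nat set set" where
  "EB q d b = {e. e \<subseteq> blk q d b \<and> card e = 2 \<and> \<not> e \<subseteq> tri d b}"
definition EE :: "nat \<Rightarrow> nat \<Rightarrow> nat set set" where
  "EE q d = (\<Union>b\<in>{..q}. EB q d b)"

lemma tri_sub: "d \<ge> 2 \<Longrightarrow> tri d b \<subseteq> blk q d b"
  by (auto simp: tri_def blk_def cB_def)

lemma blk_disj: "b \<le> q \<Longrightarrow> b' \<le> q \<Longrightarrow> b \<noteq> b' \<Longrightarrow> blk q d b \<inter> blk q d b' = {}"
proof -
  have key: "blk q d b \<inter> blk q d b' = {}" if "b < b'" "b' \<le> q" for b b'
  proof -
    have "b*(d+1) + cB q d b = (b+1)*(d+1)" using that by (simp add: cB_def)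
    also have "\<dots> \<le> b'*(d+1)" using that by (intro mult_le_mono1) simp
    finally show ?thesis by (auto simp: blk_def)
  qed
  assume "b \<le> q" "b' \<le> q" "b \<noteq> b'"
  thus ?thesis using key[of b b'] key[of b' b] by (cases "b < b'") (auto simp: Int_commute)
qed

lemma card_blk: "card (blk q d b) = cB q d b" by (simp add: blk_def)
lemma card_tri: "card (tri d b) = 3" by (simp add: tri_def)

lemma sum_split: "(\<Sum>b\<in>{..(q::nat)}. f b) = (\<Sum>b<q. f b) + f q"
proof -
  have "{..q} = insert q {..<q}" by auto
  thus ?thesis by (simp add: add.commute)
qed

lemma card_VV: "card (VV q d) = q*(d+1) + (d+2)"
proof -
  have "card (VV q d) = (\<Sum>b\<in>{..q}. card (blk q d b))"
    unfolding VV_def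
  proof (rule card_UN_disjoint)
    show "\<forall>i\<in>{..q}. \<forall>j\<in>{..q}. i \<noteq> j \<longrightarrow> blk q d i \<inter> blk q d j = {}"
      using blk_disj by auto
  qed (auto simp: blk_def)
  also have "\<dots> = (\<Sum>b<q. cB q d b) + cB q d q" by (simp add: sum_split card_blk)
  also have "(\<Sum>b<q. cB q d b) = (\<Sum>b<q. d+1)" by (rule sum.cong) (auto simp: cB_def)
  finally show ?thesis by (simp add: cB_def)
qed

lemma card_EB: assumes "d \<ge> 2" shows "card (EB q d b) = (cB q d b choose 2) - 3"
proof -
  have "EB q d b = {e. e \<subseteq> blk q d b \<and> card e = 2} - {e. e \<subseteq> tri d b \<and> card e = 2}"
    by (auto simp: EB_def)
  moreover have "{e. e \<subseteq> tri d b \<and> card e = 2} \<subseteq> {e. e \<subseteq> blk q d b \<and> card e = 2}"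
    using tri_sub[OF assms] by auto
  moreover have "finite {e. e \<subseteq> tri d b \<and> card e = 2}" by (simp add: tri_def)
  moreover have "card {e. e \<subseteq> blk q d b \<and> card e = 2} = cB q d b choose 2"
    using n_subsets[of "blk q d b" 2] by (simp add: card_blk blk_def)
  moreover have "card {e. e \<subseteq> tri d b \<and> card e = 2} = 3"
    using n_subsets[of "tri d b" 2] by (simp add: card_tri tri_def choose_two)
  ultimately show ?thesis by (simp add: card_Diff_subset)
qed

lemma card_EE: assumes "d \<ge> 2" shows "card (EE q d) = q*((d+1 choose 2) - 3) + ((d+2 choose 2) - 3)"
proof -
  have fin: "finite (EB q d b)" for b
    by (rule finite_subset[of _ "Pow (blk q d b)"]) (auto simp: EB_def blk_def)
  have "card (EE q d) = (\<Sum>b\<in>{..q}. card (EB q d b))"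
    unfolding EE_def
  proof (rule card_UN_disjoint)
    show "\<forall>i\<in>{..q}. \<forall>j\<in>{..q}. i \<noteq> j \<longrightarrow> EB q d i \<inter> EB q d j = {}"
    proof (intro ballI impI)
      fix i j assume ij: "i \<in> {..q}" "j \<in> {..q}" "i \<noteq> j"
      show "EB q d i \<inter> EB q d j = {}"
      proof (rule ccontr)
        assume "EB q d i \<inter> EB q d j \<noteq> {}"
        then obtain e where "e \<subseteq> blk q d i" "e \<subseteq> blk q d j" "card e = 2" by (auto simp: EB_def)
        hence "e = {}" using blk_disj[of i q j d] ij by auto
        thus False using \<open>card e = 2\<close> by simp
      qed
    qed
  qed (auto simp: fin)
  also have "\<dots> = (\<Sum>b<q. card (EB q d b)) + card (EB q d q)" by (rule sum_split)
  also have "(\<Sum>b<q. card (EB q d b)) = (\<Sum>b<q. (d+1 choose 2) - 3)"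
    by (rule sum.cong) (auto simp: card_EB[OF assms] cB_def)
  finally show ?thesis by (simp add: card_EB[OF assms] cB_def)
qed

lemma edges_bound: assumes "d \<ge> 2" "d \<le> 4 + 6*q"
  shows "2 * card (EE q d) \<le> d * card (VV q d)"
proof -
  define X where "X = (d+1 choose 2)"
  define Y where "Y = (d+2 choose 2)"
  have c1: "2 * X = (d+1)*d" unfolding X_def by (simp only: choose_two) simp
  have c2: "2 * Y = (d+2)*(d+1)" unfolding Y_def by (simp only: choose_two) simp
  have m1: "(d+1)*d \<ge> 3*2" by (rule mult_le_mono) (use assms(1) in auto)
  have m2: "(d+2)*(d+1) \<ge> 4*3" by (rule mult_le_mono) (use assms(1) in auto)
  have g1: "X \<ge> 3" using c1 m1 by linarith
  have g2: "Y \<ge> 3" using c2 m2 by linarith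
  have cE: "card (EE q d) = q*(X-3) + (Y-3)" unfolding X_def Y_def by (rule card_EE[OF assms(1)])
  have i1: "2 * int X = (int d + 1) * int d"
  proof -
    have "int (2*X) = int ((d+1)*d)" using c1 by simp
    thus ?thesis by (simp add: algebra_simps)
  qed
  have i2: "2 * int Y = (int d + 2) * (int d + 1)"
  proof -
    have "int (2*Y) = int ((d+2)*(d+1))" using c2 by simp
    thus ?thesis by (simp add: algebra_simps)
  qed
  have "int (2 * card (EE q d)) = 2 * (int q * (int X - 3) + (int Y - 3))"
    using g1 g2 by (simp add: cE of_nat_diff)
  also have "\<dots> = int q * (2 * int X - 6) + (2 * int Y - 6)" by (simp add: algebra_simps)
  also have "\<dots> = int q * ((int d + 1) * int d - 6) + ((int d + 2) * (int d + 1) - 6)"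
    by (simp only: i1 i2)
  also have "\<dots> = int d * (int q * (int d + 1) + (int d + 2)) + (int d - 4 - 6 * int q)"
    by (simp add: algebra_simps)
  also have "\<dots> \<le> int d * (int q * (int d + 1) + (int d + 2))"
    using assms(2) by simp
  also have "\<dots> = int (d * card (VV q d))" by (simp add: card_VV algebra_simps)
  finally show ?thesis by linarith
qed

lemma alpha_VV: assumes "d \<ge> 2" shows "alpha_k (VV q d) (EE q d) 2 \<le> 3 * (q + 1)"
proof (rule alpha_le)
  show "finite (VV q d)" by (simp add: VV_def blk_def)
  fix S assume kS: "k_independent (VV q d) (EE q d) 2 S"
  hence SV: "S \<subseteq> VV q d" and deg: "\<And>v. v \<in> S \<Longrightarrow> card {u\<in>S. {u,v} \<in> EE q d} \<le> 2"
    by (auto simp: k_independent_def)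
  have fS: "finite S" using SV by (rule finite_subset) (simp add: VV_def blk_def)
  have each: "card (S \<inter> blk q d b) \<le> 3" if bq: "b \<le> q" for b
  proof (rule ccontr)
    assume "\<not> card (S \<inter> blk q d b) \<le> 3"
    hence c4: "card (S \<inter> blk q d b) \<ge> 4" by simp
    have "card (S \<inter> blk q d b - tri d b) \<ge> card (S \<inter> blk q d b) - card (tri d b)"
      by (rule diff_card_le_card_Diff) (simp add: tri_def)
    hence "card (S \<inter> blk q d b - tri d b) \<ge> 1" using c4 card_tri[of d b] by linarith
    hence "S \<inter> blk q d b - tri d b \<noteq> {}" by (metis card.empty not_one_le_zero)
    then obtain v where "v \<in> S \<inter> blk q d b - tri d b" by blast
    hence v: "v \<in> S" "v \<in> blk q d b" "v \<notin> tri d b" by auto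
    have "S \<inter> blk q d b - {v} \<subseteq> {u\<in>S. {u,v} \<in> EE q d}"
    proof
      fix u assume u: "u \<in> S \<inter> blk q d b - {v}"
      have "{u,v} \<in> EB q d b" using u v by (auto simp: EB_def card_2_iff)
      thus "u \<in> {u\<in>S. {u,v} \<in> EE q d}" using u bq by (auto simp: EE_def)
    qed
    hence "card (S \<inter> blk q d b - {v}) \<le> card {u\<in>S. {u,v} \<in> EE q d}"
      by (rule card_mono[rotated]) (simp add: fS)
    moreover have "card (S \<inter> blk q d b - {v}) = card (S \<inter> blk q d b) - 1"
      using v fS by simp
    ultimately show False using deg[OF v(1)] c4 by linarith
  qed
  have "S = (\<Union>b\<in>{..q}. S \<inter> blk q d b)" using SV by (auto simp: VV_def)
  moreover have "card (\<Union>b\<in>{..q}. S \<inter> blk q d b) = (\<Sum>b\<in>{..q}. card (S \<inter> blk q d b))"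
  proof (rule card_UN_disjoint)
    show "\<forall>i\<in>{..q}. \<forall>j\<in>{..q}. i \<noteq> j \<longrightarrow> (S \<inter> blk q d i) \<inter> (S \<inter> blk q d j) = {}"
      using blk_disj by blast
  qed (auto simp: fS)
  ultimately have "card S = (\<Sum>b\<in>{..q}. card (S \<inter> blk q d b))" by simp
  also have "\<dots> \<le> (\<Sum>b\<in>{..q}. 3)" by (rule sum_mono) (simp add: each)
  finally show "card S \<le> 3 * (q+1)" by simp
qed


theorem mainTheorem12:
  fixes q d :: nat
  assumes "2 \<le> d" and "d \<le> 4 + 6 * q"
  shows "3 / (real d + 3) \<le> f_ratio 2 (real d)
       \<and> f_ratio 2 (real d) \<le> 3 / (real d + 1 + 1 / (real q + 1))"
proof -
  define \<Omega> where "\<Omega> = {real (alpha_k V E 2) / real (card V) | V E.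
      simple_graph V E \<and> V \<noteq> {} \<and> avg_degree V E \<le> real d}"
  have fr: "f_ratio 2 (real d) = Inf \<Omega>" unfolding f_ratio_def \<Omega>_def ..
  have lowb: "3 / (real d + 3) \<le> x" if "x \<in> \<Omega>" for x
  proof -
    obtain V E where x: "x = real (alpha_k V E 2) / real (card V)" and sg: "simple_graph V E"
      and Vne: "V \<noteq> {}" and avg: "avg_degree V E \<le> real d"
      using \<open>x \<in> \<Omega>\<close> unfolding \<Omega>_def by blast
    have fV: "finite V" using sg by (simp add: simple_graph_def)
    have npos: "real (card V) > 0" using fV Vne by (simp add: card_gt_0_iff)
    define A where "A = real (alpha_k V E 2)"
    define n where "n = real (card V)"
    define m where "m = real (card E)"
    have key: "3 * n^2 \<le> A * (2*m + 3*n)"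
    proof -
      have "real (3 * card V ^ 2) \<le> real (alpha_k V E 2 * (2 * card E + 3 * card V))"
        using lower_nat[OF sg] by (simp only: of_nat_le_iff)
      thus ?thesis unfolding A_def n_def m_def by simp
    qed
    have "2*m / n \<le> real d" using avg unfolding avg_degree_def m_def n_def by simp
    hence m2: "2*m \<le> real d * n" using npos unfolding n_def by (simp add: divide_le_eq)
    have A0: "A \<ge> 0" unfolding A_def by simp
    have "3 * n * n \<le> A * (real d * n + 3*n)"
    proof -
      have "A * (2*m + 3*n) \<le> A * (real d * n + 3*n)" using m2 A0 by (intro mult_left_mono) auto
      thus ?thesis using key by (simp add: power2_eq_square)
    qed
    hence "(3 * n) * n \<le> (A * (real d + 3)) * n" by (simp add: algebra_simps)
    hence "3 * n \<le> A * (real d + 3)" using npos unfolding n_def by (simp add: mult_le_cancel_right)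
    hence "3 / (real d + 3) \<le> A / n" using npos unfolding n_def
      by (simp add: divide_le_eq le_divide_eq field_simps)
    thus ?thesis using x unfolding A_def n_def by simp
  qed
  have ne: "\<Omega> \<noteq> {}"
  proof -
    have "simple_graph {0} {}" by (simp add: simple_graph_def)
    moreover have "avg_degree {0} {} \<le> real d" by (simp add: avg_degree_def)
    ultimately have "real (alpha_k {0} {} 2) / real (card {0::nat}) \<in> \<Omega>" unfolding \<Omega>_def by blast
    thus ?thesis by blast
  qed
  have part1: "3 / (real d + 3) \<le> Inf \<Omega>" by (rule cInf_greatest[OF ne lowb])
  have bdd: "bdd_below \<Omega>"
  proof
    fix x assume "x \<in> \<Omega>"
    then obtain V E where "x = real (alpha_k V E 2) / real (card V)" unfolding \<Omega>_def by blast
    thus "0 \<le> x" by simp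
  qed
  have sgC: "simple_graph (VV q d) (EE q d)"
    unfolding simple_graph_def
  proof
    show "finite (VV q d)" by (simp add: VV_def blk_def)
    show "\<forall>e\<in>EE q d. e \<subseteq> VV q d \<and> card e = 2"
      by (auto simp: EE_def EB_def VV_def)
  qed
  have cV: "card (VV q d) = q*(d+1) + (d+2)" by (rule card_VV)
  have VVne: "VV q d \<noteq> {}" using cV by auto
  have eb: "2 * card (EE q d) \<le> d * card (VV q d)" by (rule edges_bound[OF assms])
  have avgC: "avg_degree (VV q d) (EE q d) \<le> real d"
  proof -
    have "card (VV q d) > 0" using cV by simp
    hence pos: "real (card (VV q d)) > 0" by simp
    have "real (2 * card (EE q d)) \<le> real (d * card (VV q d))" using eb by (simp only: of_nat_le_iff)
    hence "2 * real (card (EE q d)) \<le> real d * real (card (VV q d))" by simp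
    thus ?thesis unfolding avg_degree_def using pos by (simp add: divide_le_eq)
  qed
  have mem: "real (alpha_k (VV q d) (EE q d) 2) / real (card (VV q d)) \<in> \<Omega>"
    unfolding \<Omega>_def using sgC VVne avgC by blast
  have aC: "real (alpha_k (VV q d) (EE q d) 2) \<le> 3 * (real q + 1)"
  proof -
    have "alpha_k (VV q d) (EE q d) 2 \<le> 3 * (q+1)" by (rule alpha_VV[OF assms(1)])
    hence "real (alpha_k (VV q d) (EE q d) 2) \<le> real (3 * (q+1))" by (simp only: of_nat_le_iff)
    thus ?thesis by simp
  qed
  have rV: "real (card (VV q d)) = (real d + 1) * (real q + 1) + 1" using cV by (simp add: algebra_simps)
  have ratio: "real (alpha_k (VV q d) (EE q d) 2) / real (card (VV q d)) \<le> 3 / (real d + 1 + 1 / (real q + 1))"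
  proof -
    have p1: "(real d + 1) * (real q + 1) + 1 > 0" by (simp add: add_pos_nonneg)
    have "real (alpha_k (VV q d) (EE q d) 2) / real (card (VV q d)) \<le> 3 * (real q + 1) / ((real d + 1) * (real q + 1) + 1)"
      unfolding rV using aC p1 by (simp add: divide_right_mono)
    also have "\<dots> = 3 / (real d + 1 + 1 / (real q + 1))"
      by (simp add: field_simps)
    finally show ?thesis .
  qed
  have part2: "Inf \<Omega> \<le> 3 / (real d + 1 + 1 / (real q + 1))"
    using cInf_lower[OF mem bdd] ratio by linarith
  show ?thesis using part1 part2 fr by simp
qed

end
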